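(* For all integers $s,l\ge 0$, as $n\to\infty$, \[ \left\langle S_{2,n}^l\left(S_{2,n}-\frac{n}{4}\right)^{2s}\right\rangle\sim\left(\frac{n}{4}\right)^l\frac{(2s-1)!!}{4^{2s}}n^s,\qquad \left\langle S_{2,n}^l\left(S_{2,n}-\frac{n}{4}\right)^{2s+1}\right\rangle\sim\left(\frac{n}{4}\right)^l\frac{(2s+1)!!}{2\cdot 4^{2s+1}}(2l+1)\,n^s. \]
   Context: For $n\ge 1$, let $\Omega_n$ be the set of rooted plane (ordered) full binary trees with $n$ leaves (every internal node has exactly two children, left and right distinguished). The random model is $\Omega_n$ with the uniform probability measure $P_n$; $\langle\cdot\rangle$ denotes expectation with respect to $P_n$. Horton–Strahler ordering: every leaf has order 1; an internal node whose two children have different orders $r_1\neq r_2$ has order $\max\{r_1,r_2\}$; an internal node whose two children both have order $r$ has order $r+1$. A branch of order $r$ is a maximal connected path consisting of nodes all of order $r$. $S_{2,n}(\tau)$ is the number of branches of order $2$ in $\tau\in\Omega_n$. For sequences, $a_n\sim b_n$ means $\lim_{n\to\infty}a_n/b_n=1$. Convention: $(-1)!!=1$. *)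

theory Defs
  imports Complex_Main "HOL-Library.Landau_Symbols"
begin

datatype btree = Leaf | Node btree btree

fun leaves :: "btree \<Rightarrow> nat" where
  "leaves Leaf = 1"
| "leaves (Node l r) = leaves l + leaves r"

definition Omega :: "nat \<Rightarrow> btree set" where
  "Omega n = {t. leaves t = n}"

fun hs :: "btree \<Rightarrow> nat" where
  "hs Leaf = 1"
| "hs (Node l r) = (if hs l = hs r then hs l + 1 else max (hs l) (hs r))"

text \<open>Nodes of order k form vertex-disjoint downward paths (a node never has two
children of its own order).  A branch of order k is a maximal such path, so it is
identified by its top node: a node of order k that is the root or whose parent has
order different from k.  branch_tops k t counts such top nodes strictly below the root.\<close>
fun branch_tops :: "nat \<Rightarrow> btree \<Rightarrow> nat" where
  "branch_tops k Leaf = 0"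
| "branch_tops k (Node l r) =
     (if hs l = k \<and> hs (Node l r) \<noteq> k then 1 else 0)
   + (if hs r = k \<and> hs (Node l r) \<noteq> k then 1 else 0)
   + branch_tops k l + branch_tops k r"

definition branches :: "nat \<Rightarrow> btree \<Rightarrow> nat" where
  "branches k t = (if hs t = k then 1 else 0) + branch_tops k t"

definition S2 :: "btree \<Rightarrow> nat" where
  "S2 t = branches 2 t"

definition expect :: "nat \<Rightarrow> (btree \<Rightarrow> real) \<Rightarrow> real" where
  "expect n f = (\<Sum>t\<in>Omega n. f t) / real (card (Omega n))"

text \<open>Double factorial; dfact 0 = 1, so (2s-1)!! with truncated nat subtraction
gives (-1)!! = 1 at s = 0.\<close>
fun dfact :: "nat \<Rightarrow> nat" where
  "dfact 0 = 1"
| "dfact (Suc 0) = 1"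
| "dfact (Suc (Suc n)) = Suc (Suc n) * dfact n"

end

theory Submission
  imports Defs "HOL-Real_Asymp.Real_Asymp"
begin



lemma leaves_pos: "leaves t \<ge> 1"
  by (induction t) auto

lemma Omega_0: "Omega 0 = {}"
proof -
  have "leaves t \<noteq> 0" for t using leaves_pos[of t] by simp
  thus ?thesis by (auto simp: Omega_def)
qed

lemma Omega_1: "Omega 1 = {Leaf}"
proof -
  have "leaves t = 1 \<Longrightarrow> t = Leaf" for t
  proof (cases t)
    case (Node l r)
    assume "leaves t = 1"
    with Node leaves_pos[of l] leaves_pos[of r] show ?thesis by simp
  qed simp
  thus ?thesis by (auto simp: Omega_def)
qed

lemma Omega_ge2: "n \<ge> 2 \<Longrightarrow> Omega n = (\<Union>p\<in>{1..<n}. (\<lambda>(l,r). Node l r) ` (Omega p \<times> Omega (n-p)))"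
proof safe
  fix t assume n: "n \<ge> 2" and t: "t \<in> Omega n"
  then obtain l r where "t = Node l r" by (cases t) (auto simp: Omega_def)
  thus "t \<in> (\<Union>p\<in>{1..<n}. (\<lambda>(l,r). Node l r) ` (Omega p \<times> Omega (n-p)))"
    using t leaves_pos[of l] leaves_pos[of r]
    by (auto simp: Omega_def intro!: bexI[of _ "leaves l"] image_eqI[of _ _ "(l,r)"])
qed (auto simp: Omega_def)

lemma finite_Omega: "finite (Omega n)"
proof (induction n rule: less_induct)
  case (less n)
  show ?case
  proof (cases "n \<ge> 2")
    case True
    show ?thesis unfolding Omega_ge2[OF True]
      by (intro finite_UN_I finite_imageI finite_cartesian_product less.IH) auto
  next
    case False
    then have "n = 0 \<or> n = 1" by auto
    thus ?thesis using Omega_0 Omega_1 by auto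
  qed
qed

lemma sum_Omega:
  assumes "n \<ge> 2"
  shows "(\<Sum>t\<in>Omega n. g t) = (\<Sum>p\<in>{1..<n}. \<Sum>l\<in>Omega p. \<Sum>r\<in>Omega (n-p). g (Node l r))"
proof -
  have "(\<Sum>t\<in>Omega n. g t) = (\<Sum>p\<in>{1..<n}. \<Sum>t\<in>(\<lambda>(l,r). Node l r) ` (Omega p \<times> Omega (n-p)). g t)"
    unfolding Omega_ge2[OF assms]
    by (rule sum.UNION_disjoint) (simp, simp add: finite_Omega, auto simp: Omega_def)
  also have "\<dots> = (\<Sum>p\<in>{1..<n}. \<Sum>lr\<in>Omega p \<times> Omega (n-p). (case lr of (l,r) \<Rightarrow> g (Node l r)))"
    by (rule sum.cong[OF refl], subst sum.reindex) (auto simp: inj_on_def split: prod.splits intro!: sum.cong)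
  also have "\<dots> = (\<Sum>p\<in>{1..<n}. \<Sum>l\<in>Omega p. \<Sum>r\<in>Omega (n-p). g (Node l r))"
    by (rule sum.cong[OF refl]) (simp add: sum.cartesian_product finite_Omega)
  finally show ?thesis .
qed




lemma hs_pos: "hs t \<ge> 1"
  by (induction t) auto

lemma hs_Node: "hs (Node l r) \<ge> 2"
  using hs_pos[of l] hs_pos[of r] by auto

lemma hs_1_iff: "hs t = 1 \<longleftrightarrow> t = Leaf"
proof (cases t)
  case (Node l r)
  then show ?thesis using hs_Node[of l r] by auto
qed simp

fun cher :: "btree \<Rightarrow> nat" where
  "cher Leaf = 0"
| "cher (Node l r) = (if l = Leaf \<and> r = Leaf then 1 else cher l + cher r)"

lemma branches_cher: "(if hs t = 2 then 1 else 0) + branch_tops 2 t = cher t"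
proof (induction t)
  case Leaf
  then show ?case by simp
next
  case (Node l r)
  show ?case
  proof (cases "l = Leaf \<and> r = Leaf")
    case True
    then show ?thesis by simp
  next
    case False
    then have nl: "\<not> (hs l = 1 \<and> hs r = 1)" using hs_1_iff by blast
    have hl: "hs l \<ge> 1" "hs r \<ge> 1" using hs_pos by auto
    show ?thesis using Node.IH False nl hl
      by (auto split: if_splits)
  qed
qed

lemma S2_cher: "S2 t = cher t"
  unfolding S2_def branches_def using branches_cher[of t] by simp

abbreviation C :: "nat \<Rightarrow> nat" where "C n \<equiv> card (Omega n)"

lemma C0: "C 0 = 0" by (simp add: Omega_0)
lemma C_conv: "n \<ge> 2 \<Longrightarrow> C n = (\<Sum>p\<in>{1..<n}. C p * C (n-p))"
  using sum_Omega[of n "\<lambda>_. 1::nat"] by simp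

lemma C1: "C 1 = 1" by (simp only: Omega_1) simp
lemma C1s [simp]: "C (Suc 0) = 1" using C1 by simp
lemma C2: "C 2 = 1"
proof -
  have "{1..<2::nat} = {1}" by auto
  thus ?thesis using C_conv[of 2] C1 by simp
qed

lemma aux_split: "x \<le> (m::nat) \<Longrightarrow> m * (a * b) = x * a * b + a * ((m - x) * b)"
proof -
  assume "x \<le> m"
  then obtain q where "m = x + q" using le_Suc_ex by blast
  thus ?thesis by (simp add: algebra_simps)
qed

lemma aux2: "1 \<le> p \<Longrightarrow> p < (n::nat) \<Longrightarrow> (2*p-1)*a*b + a*((2*(n-p)-1)*b) = (2*n-2)*(a*b)"
proof -
  assume a: "1 \<le> p" "p < n"
  then obtain p' q' where "p = Suc p'" "n = Suc p' + Suc q'"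
    by (metis add_Suc_right le_add_diff_inverse less_imp_Suc_add not0_implies_Suc not_one_le_zero)
  thus ?thesis by (simp add: algebra_simps)
qed

lemma C_ratio: "n \<ge> 1 \<Longrightarrow> (n+1) * C (n+1) = 2 * ((2*n-1) * C n)"
proof (induction n rule: less_induct)
  case (less n)
  show ?case
  proof (cases "n = 1")
    case True
    then show ?thesis using C2 C1 by (simp add: numeral_2_eq_2)
  next
    case False
    with less.prems have n2: "n \<ge> 2" by simp
    define L where "L k = k * C k" for k
    define N where "N k = (2*k-1) * C k" for k
    have IH: "L (Suc k) = 2 * N k" if "1 \<le> k" "k < n" for k
      using less.IH[OF that(2) that(1)] by (simp add: L_def N_def)
    have "L (n+1) = (\<Sum>p\<in>{1..<n+1}. (n+1) * (C p * C (n+1-p)))"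
    proof -
      have "L (n+1) = (n+1) * (\<Sum>p\<in>{1..<n+1}. C p * C (n+1-p))"
        using C_conv[of "n+1"] n2 by (simp add: L_def)
      also have "\<dots> = (\<Sum>p\<in>{1..<n+1}. (n+1) * (C p * C (n+1-p)))"
        by (rule sum_distrib_left)
      finally show ?thesis .
    qed
    also have "\<dots> = (\<Sum>p\<in>{1..<n+1}. L p * C (n+1-p)) + (\<Sum>p\<in>{1..<n+1}. C p * L (n+1-p))"
      unfolding sum.distrib[symmetric] by (rule sum.cong) (simp_all only: L_def, rule aux_split, simp)
    also have "(\<Sum>p\<in>{1..<n+1}. L p * C (n+1-p)) = C n + (\<Sum>p\<in>{1..<n}. L (p+1) * C (n-p))"
    proof -
      have "{1..<n+1} = insert 1 ((\<lambda>p. p+1) ` {1..<n})" using n2 by (auto simp: image_iff)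
      hence "(\<Sum>p\<in>{1..<n+1}. L p * C (n+1-p)) = L 1 * C n + (\<Sum>p\<in>(\<lambda>p. p+1) ` {1..<n}. L p * C (n+1-p))"
        by (simp add: sum.insert)
      also have "(\<Sum>p\<in>(\<lambda>p. p+1) ` {1..<n}. L p * C (n+1-p)) = (\<Sum>p\<in>{1..<n}. L (p+1) * C (n-p))"
        by (subst sum.reindex) auto
      moreover have "L 1 = 1" by (simp add: L_def)
      ultimately show ?thesis by simp
    qed
    also have "(\<Sum>p\<in>{1..<n+1}. C p * L (n+1-p)) = C n + (\<Sum>p\<in>{1..<n}. C p * L (n-p+1))"
    proof -
      have "{1..<n+1} = insert n {1..<n}" using n2 by auto
      hence "(\<Sum>p\<in>{1..<n+1}. C p * L (n+1-p)) = C n * L 1 + (\<Sum>p\<in>{1..<n}. C p * L (n+1-p))"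
        by (simp add: sum.insert)
      also have "(\<Sum>p\<in>{1..<n}. C p * L (n+1-p)) = (\<Sum>p\<in>{1..<n}. C p * L (n-p+1))"
        by (rule sum.cong) (auto simp: Suc_diff_le)
      moreover have "L 1 = 1" by (simp add: L_def)
      ultimately show ?thesis by simp
    qed
    also have "(\<Sum>p\<in>{1..<n}. L (p+1) * C (n-p)) = (\<Sum>p\<in>{1..<n}. 2 * (N p * C (n-p)))"
      by (rule sum.cong) (auto simp: IH)
    also have "(\<Sum>p\<in>{1..<n}. C p * L (n-p+1)) = (\<Sum>p\<in>{1..<n}. 2 * (C p * N (n-p)))"
      by (rule sum.cong) (auto simp: IH)
    finally have "L (n+1) = 2 * (C n + (\<Sum>p\<in>{1..<n}. N p * C (n-p) + C p * N (n-p)))"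
      by (simp add: sum_distrib_left[symmetric] sum.distrib)
    also have "(\<Sum>p\<in>{1..<n}. N p * C (n-p) + C p * N (n-p)) = (\<Sum>p\<in>{1..<n}. (2*n-2) * (C p * C (n-p)))"
      by (rule sum.cong) (simp_all only: N_def, rule aux2, auto)
    also have "\<dots> = (2*n-2) * C n" using C_conv[OF n2] by (simp add: sum_distrib_left)
    also have "C n + (2*n-2) * C n = N n" using n2 by (simp add: N_def algebra_simps)
    finally show ?thesis by (simp add: L_def N_def)
  qed
qed




lemma sum_from1: "g 0 = 0 \<Longrightarrow> (\<Sum>p\<in>{1..<n::nat}. g p) = (\<Sum>p<n. (g p :: 'a::comm_monoid_add))"
proof (cases n)
  case (Suc k)
  assume g0: "g 0 = 0"
  have "{..<n} = insert 0 {1..<n}" using Suc by auto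
  thus ?thesis using g0 by simp
qed simp

lemma sum_shift_sub: "F 0 = 0 \<Longrightarrow> (\<Sum>p<n::nat. F (p - i)) = (\<Sum>q<n - i. (F q :: 'a::comm_monoid_add))"
proof (induction n)
  case (Suc n)
  show ?case
  proof (cases "n < i")
    case True
    then have "Suc n - i = n - i" "n - i = 0" by auto
    then show ?thesis using Suc by simp
  next
    case False
    then have "Suc n - i = Suc (n - i)" by auto
    then show ?thesis using Suc by simp
  qed
qed simp

lemma sum_trunc: "b \<le> (a::nat) \<Longrightarrow> (\<And>q. q \<ge> b \<Longrightarrow> F q = 0) \<Longrightarrow> (\<Sum>q<a. F q) = (\<Sum>q<b. (F q :: 'a::comm_monoid_add))"
  by (rule sum.mono_neutral_right) (auto simp: not_less)

definition V :: "nat \<Rightarrow> nat \<Rightarrow> nat" where "V m i = (m choose i) * C m"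

lemma V0 [simp]: "V 0 i = 0" by (simp add: V_def C0)

lemma Omega_1' [simp]: "Omega (Suc 0) = {Leaf}" using Omega_1 by simp

lemma Omega2: "Omega 2 = {Node Leaf Leaf}"
proof -
  have "{1..<2::nat} = {1}" by auto
  thus ?thesis unfolding Omega_ge2[of 2, simplified] by (simp add: Omega_1)
qed

lemma cher_Node: "leaves (Node l r) \<ge> 3 \<Longrightarrow> cher (Node l r) = cher l + cher r"
  by auto

lemma W_formula: "(\<Sum>t\<in>Omega n. cher t choose j) = V (n - j) j"
proof (induction n arbitrary: j rule: less_induct)
  case (less n)
  consider "n = 0" | "n = 1" | "n = 2" | "n \<ge> 3" by linarith
  then show ?case
  proof cases
    case 1 then show ?thesis by (simp add: Omega_0)
  next
    case 2 then show ?thesis by (cases j) (auto simp: Omega_1 V_def)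
  next
    case 3
    have "(\<Sum>t\<in>Omega 2. cher t choose j) = (1 choose j)" by (simp add: Omega2)
    moreover have "V (2 - j) j = (1 choose j)"
    proof -
      consider "j = 0" | "j = 1" | "j \<ge> 2" by linarith
      thus ?thesis by cases (auto simp: V_def C2 C0)
    qed
    ultimately show ?thesis using 3 by simp
  next
    case 4
    define m where "m = n - j"
    have n2: "n \<ge> 2" using 4 by simp
    have "(\<Sum>t\<in>Omega n. cher t choose j) =
        (\<Sum>p\<in>{1..<n}. \<Sum>l\<in>Omega p. \<Sum>r\<in>Omega (n-p). cher (Node l r) choose j)"
      by (rule sum_Omega[OF n2])
    also have "\<dots> = (\<Sum>p\<in>{1..<n}. \<Sum>l\<in>Omega p. \<Sum>r\<in>Omega (n-p). (cher l + cher r) choose j)"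
      by (intro sum.cong refl, subst cher_Node) (use 4 in \<open>auto simp: Omega_def\<close>)
    also have "\<dots> = (\<Sum>p\<in>{1..<n}. \<Sum>i\<le>j. (\<Sum>l\<in>Omega p. cher l choose i) * (\<Sum>r\<in>Omega (n-p). cher r choose (j - i)))"
    proof (intro sum.cong refl)
      fix p
      have "(\<Sum>l\<in>Omega p. \<Sum>r\<in>Omega (n-p). (cher l + cher r) choose j)
          = (\<Sum>l\<in>Omega p. \<Sum>r\<in>Omega (n-p). \<Sum>i\<le>j. (cher l choose i) * (cher r choose (j - i)))"
        by (simp add: vandermonde)
      also have "\<dots> = (\<Sum>l\<in>Omega p. \<Sum>i\<le>j. \<Sum>r\<in>Omega (n-p). (cher l choose i) * (cher r choose (j - i)))"
        by (intro sum.cong refl) (rule sum.swap)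
      also have "\<dots> = (\<Sum>i\<le>j. \<Sum>l\<in>Omega p. \<Sum>r\<in>Omega (n-p). (cher l choose i) * (cher r choose (j - i)))"
        by (rule sum.swap)
      also have "\<dots> = (\<Sum>i\<le>j. (\<Sum>l\<in>Omega p. cher l choose i) * (\<Sum>r\<in>Omega (n-p). cher r choose (j - i)))"
        by (simp add: sum_product)
      finally show "(\<Sum>l\<in>Omega p. \<Sum>r\<in>Omega (n-p). (cher l + cher r) choose j) = (\<Sum>i\<le>j. (\<Sum>l\<in>Omega p. cher l choose i) * (\<Sum>r\<in>Omega (n-p). cher r choose (j - i)))" .
    qed
    also have "\<dots> = (\<Sum>p\<in>{1..<n}. \<Sum>i\<le>j. V (p - i) i * V (n - p - (j - i)) (j - i))"
      by (intro sum.cong refl) (simp add: less.IH)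
    also have "\<dots> = (\<Sum>i\<le>j. \<Sum>p\<in>{1..<n}. V (p - i) i * V (n - p - (j - i)) (j - i))"
      by (rule sum.swap)
    also have "\<dots> = (\<Sum>i\<le>j. \<Sum>q<m. V q i * V (m - q) (j - i))"
    proof (rule sum.cong[OF refl])
      fix i assume i: "i \<in> {..j}"
      define F where "F q = V q i * V (m - q) (j - i)" for q
      have "(\<Sum>p\<in>{1..<n}. V (p - i) i * V (n - p - (j - i)) (j - i)) = (\<Sum>p\<in>{1..<n}. F (p - i))"
      proof (intro sum.cong refl)
        fix p assume "p \<in> {1..<n}"
        show "V (p - i) i * V (n - p - (j - i)) (j - i) = F (p - i)"
        proof (cases "i \<le> p")
          case True
          then have "n - p - (j - i) = m - (p - i)" using i by (simp add: m_def)
          then show ?thesis by (simp add: F_def)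
        next
          case False
          then show ?thesis by (simp add: F_def)
        qed
      qed
      also have "\<dots> = (\<Sum>p<n. F (p - i))" by (rule sum_from1) (simp add: F_def)
      also have "\<dots> = (\<Sum>q<n - i. F q)" by (rule sum_shift_sub) (simp add: F_def)
      also have "\<dots> = (\<Sum>q<m. F q)"
        by (rule sum_trunc) (use i in \<open>auto simp: m_def F_def\<close>)
      finally show "(\<Sum>p\<in>{1..<n}. V (p - i) i * V (n - p - (j - i)) (j - i)) = (\<Sum>q<m. V q i * V (m - q) (j - i))"
        by (simp add: F_def)
    qed
    also have "\<dots> = (\<Sum>q<m. \<Sum>i\<le>j. V q i * V (m - q) (j - i))"
      by (rule sum.swap)
    also have "\<dots> = V m j"
    proof (cases "m \<ge> 2")
      case True
      have "V m j = (m choose j) * (\<Sum>q<m. C q * C (m - q))"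
        using C_conv[OF True] sum_from1[of "\<lambda>q. C q * C (m - q)" m] by (simp add: V_def C0)
      also have "\<dots> = (\<Sum>q<m. \<Sum>i\<le>j. V q i * V (m - q) (j - i))"
        unfolding sum_distrib_left
      proof (intro sum.cong refl)
        fix q assume "q \<in> {..<m}"
        then have "m = q + (m - q)" by simp
        then have "m choose j = (\<Sum>i\<le>j. (q choose i) * ((m - q) choose (j - i)))"
          using vandermonde[of q "m - q" j] by simp
        thus "(m choose j) * (C q * C (m - q)) = (\<Sum>i\<le>j. V q i * V (m - q) (j - i))"
          by (simp add: V_def sum_distrib_left sum_distrib_right mult_ac)
      qed
      finally show ?thesis by simp
    next
      case False
      then have "m = 0 \<or> m = 1" by auto
      then show ?thesis
      proof
        assume "m = 1"
        then have "j \<ge> 2" using 4 by (simp add: m_def)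
        then show ?thesis using \<open>m = 1\<close> by (simp add: V_def C0)
      qed simp
    qed
    finally show ?thesis by (simp add: m_def)
  qed
qed




fun ff :: "nat \<Rightarrow> real \<Rightarrow> real" where
  "ff 0 x = 1"
| "ff (Suc j) x = ff j x * (x - real j)"

declare ff.simps(2)[simp del]

lemma choose_Suc_mult: "(k choose Suc j) * Suc j = (k choose j) * (k - j)"
proof (cases k)
  case (Suc k')
  have "(k choose Suc j) * Suc j = Suc k' * (k' choose j)"
    using Suc_times_binomial[of j k'] Suc by (simp add: mult.commute)
  also have "\<dots> = (k choose j) * (k - j)"
    using binomial_absorb_comp[of k j] Suc by (simp add: mult.commute)
  finally show ?thesis .
qed simp

lemma ff_nat: "ff j (real k) = fact j * real (k choose j)"
proof (induction j)
  case (Suc j)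
  have "real ((k choose Suc j) * Suc j) = real ((k choose j) * (k - j))"
    by (simp only: choose_Suc_mult)
  then have e: "real (k choose Suc j) * (real j + 1) = real (k choose j) * real (k - j)"
    by (simp only: of_nat_mult of_nat_Suc add.commute)
  show ?case
  proof (cases "j \<le> k")
    case True
    have "ff (Suc j) (real k) = fact j * (real (k choose j) * real (k - j))"
      using Suc True by (simp add: ff.simps of_nat_diff)
    also have "\<dots> = fact j * (real (k choose Suc j) * (real j + 1))" using e by simp
    also have "\<dots> = fact (Suc j) * real (k choose Suc j)" by (simp add: algebra_simps)
    finally show ?thesis .
  next
    case False
    then show ?thesis using Suc by (simp add: ff.simps binomial_eq_0)
  qed
qed simp

lemma ff_shift: "x * ff j (x - 1) = ff (Suc j) x"
proof (induction j)
  case 0 then show ?case by (simp add: ff.simps)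
next
  case (Suc j)
  have "x * ff (Suc j) (x - 1) = (x * ff j (x - 1)) * (x - 1 - real j)" by (simp add: ff.simps)
  also have "\<dots> = ff j x * (x - real j) * (x - real (Suc j))" by (simp add: Suc.IH ff.simps)
  also have "\<dots> = ff (Suc (Suc j)) x" by (simp add: ff.simps)
  finally show ?case .
qed

lemma ff_zero: "j > k \<Longrightarrow> ff j (real k) = 0"
  by (simp add: ff_nat)

definition mu :: "nat \<Rightarrow> nat \<Rightarrow> real" where
  "mu n j = (\<Sum>t\<in>Omega n. ff j (real (cher t)))"

lemma mu_formula: "mu n j = ff j (real (n - j)) * real (C (n - j))"
proof -
  have "mu n j = fact j * real (\<Sum>t\<in>Omega n. cher t choose j)"
    by (simp add: mu_def ff_nat sum_distrib_left)
  also have "\<dots> = ff j (real (n - j)) * real (C (n - j))"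
    by (simp add: W_formula V_def ff_nat)
  finally show ?thesis .
qed

lemma C_ratio_real: "m \<ge> 2 \<Longrightarrow> real m * real (C m) = 2 * (2 * real m - 3) * real (C (m - 1))"
proof -
  assume m: "m \<ge> 2"
  have "real ((m - 1 + 1) * C (m - 1 + 1)) = real (2 * ((2 * (m - 1) - 1) * C (m - 1)))"
    using C_ratio[of "m - 1"] m by simp
  moreover have "m - 1 + 1 = m" using m by simp
  moreover have "real (2 * (m - 1) - 1) = 2 * real m - 3" using m by (simp add: of_nat_diff)
  ultimately show ?thesis by (simp add: algebra_simps)
qed

lemma mu_ratio: "2 * (2 * real n - 2 * real j - 3) * mu n (Suc j)
    = (real n - 2 * real j) * (real n - 2 * real j - 1) * mu n j"
proof -
  consider "n \<le> j" | "n = j + 1" | "n \<ge> j + 2" by linarith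
  then show ?thesis
  proof cases
    case 1 then show ?thesis by (simp add: mu_formula C0)
  next
    case 2
    have "mu n (Suc j) = 0" using 2 by (simp add: mu_formula C0)
    moreover have "(real n - 2 * real j) * (real n - 2 * real j - 1) * mu n j = 0"
    proof (cases "j \<ge> 2")
      case True
      then have "ff j (real 1) = 0" by (intro ff_zero) simp
      then show ?thesis using 2 by (simp add: mu_formula)
    next
      case False
      then have "j = 0 \<or> j = 1" by auto
      then show ?thesis using 2 by auto
    qed
    ultimately show ?thesis by simp
  next
    case 3
    define m where "m = n - j"
    have m2: "m \<ge> 2" and nm: "n = m + j" using 3 by (auto simp: m_def)
    have e1: "n - Suc j = m - 1" by (simp add: m_def)
    have rm1: "real (m - Suc 0) = real m - 1" using m2 by (simp add: of_nat_diff)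
    have A: "real m * ff (Suc j) (real m - 1) = ff j (real m) * (real m - real j) * (real m - real j - 1)"
      using ff_shift[of "real m" "Suc j"] by (simp add: ff.simps algebra_simps)
    have "real m * (2 * (2 * real n - 2 * real j - 3) * mu n (Suc j))
        = 2 * (2 * real m - 3) * real (C (m - 1)) * (real m * ff (Suc j) (real m - 1))"
      by (simp add: mu_formula e1 rm1 nm algebra_simps)
    also have "\<dots> = real m * real (C m) * (ff j (real m) * (real m - real j) * (real m - real j - 1))"
      using C_ratio_real[OF m2] A by simp
    also have "\<dots> = real m * ((real n - 2 * real j) * (real n - 2 * real j - 1) * mu n j)"
      by (simp add: mu_formula m_def[symmetric] nm algebra_simps)
    finally show ?thesis using m2 by simp
  qed
qed

definition stein :: "nat \<Rightarrow> (real \<Rightarrow> real) \<Rightarrow> real" where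
  "stein n f = (\<Sum>t\<in>Omega n. 4 * real (cher t) * (real (cher t) - 1) * f (real (cher t) - 1)
      - (real n - 2 * real (cher t)) * (real n - 2 * real (cher t) - 1) * f (real (cher t)))"

lemma stein_ff: "stein n (ff j) = 0"
proof -
  have pt: "4 * k * (k - 1) * ff j (k - 1) - (real n - 2 * k) * (real n - 2 * k - 1) * ff j k
      = (4 * real n - 4 * real j - 6) * ff (Suc j) k - (real n - 2 * real j) * (real n - 2 * real j - 1) * ff j k"
    for k :: real
  proof -
    have "k * ff j (k - 1) = ff j k * (k - real j)" using ff_shift[of k j] by (simp add: ff.simps)
    then have h: "4 * k * (k - 1) * ff j (k - 1) = 4 * (k - 1) * (k - real j) * ff j k"
      by (metis (no_types, lifting) mult.commute mult.left_commute)
    show ?thesis unfolding h by (simp add: ff.simps algebra_simps)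
  qed
  have "stein n (ff j) = (4 * real n - 4 * real j - 6) * mu n (Suc j) - (real n - 2 * real j) * (real n - 2 * real j - 1) * mu n j"
    unfolding stein_def pt mu_def by (simp add: sum_subtractf sum_distrib_left)
  also have "\<dots> = 0" using mu_ratio[of n j] by (simp add: algebra_simps)
  finally show ?thesis .
qed

inductive_set PS :: "(real \<Rightarrow> real) set" where
  base: "ff j \<in> PS"
| add: "f \<in> PS \<Longrightarrow> g \<in> PS \<Longrightarrow> (\<lambda>x. f x + g x) \<in> PS"
| scal: "f \<in> PS \<Longrightarrow> (\<lambda>x. c * f x) \<in> PS"

lemma stein_PS: "f \<in> PS \<Longrightarrow> stein n f = 0"
proof (induction rule: PS.induct)
  case (base j) then show ?case by (rule stein_ff)
next
  case (add f g)
  have "stein n (\<lambda>x. f x + g x) = stein n f + stein n g"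
    unfolding stein_def by (simp add: sum.distrib[symmetric] algebra_simps)
  then show ?case using add by simp
next
  case (scal f c)
  have "stein n (\<lambda>x. c * f x) = c * stein n f"
    unfolding stein_def by (simp add: sum_distrib_left algebra_simps)
  then show ?case using scal by simp
qed

lemma PS_mult_x: "f \<in> PS \<Longrightarrow> (\<lambda>x. x * f x) \<in> PS"
proof (induction rule: PS.induct)
  case (base j)
  have "(\<lambda>x. x * ff j x) = (\<lambda>x. ff (Suc j) x + real j * ff j x)"
    by (auto simp: algebra_simps ff.simps)
  then show ?case by (simp add: PS.add PS.base PS.scal)
next
  case (add f g)
  have "(\<lambda>x. x * (f x + g x)) = (\<lambda>x. x * f x + x * g x)" by (auto simp: algebra_simps)
  then show ?case using add by (simp add: PS.add)
next
  case (scal f c)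
  have "(\<lambda>x. x * (c * f x)) = (\<lambda>x. c * (x * f x))" by (auto simp: algebra_simps)
  then show ?case using scal by (simp add: PS.scal)
qed

lemma PS_pow: "(\<lambda>x. (x - c) ^ m) \<in> PS"
proof (induction m)
  case 0
  have "(\<lambda>x::real. (x - c) ^ 0) = ff 0" by auto
  then show ?case using PS.base[of 0] by simp
next
  case (Suc m)
  have eq: "(\<lambda>x. (x - c) ^ Suc m) = (\<lambda>x. x * (x - c) ^ m + (- c) * (x - c) ^ m)"
    by (auto simp: algebra_simps)
  have "(\<lambda>x. x * (x - c) ^ m + (- c) * (x - c) ^ m) \<in> PS"
    by (rule PS.add[OF PS_mult_x[OF Suc] PS.scal[OF Suc]])
  then show ?case unfolding eq .
qed

lemma stein_pow: "stein n (\<lambda>x. (x - c) ^ m) = 0"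
  by (rule stein_PS[OF PS_pow])




definition Ms :: "nat \<Rightarrow> nat \<Rightarrow> real" where
  "Ms n i = (\<Sum>t\<in>Omega n. (real (cher t) - real n / 4) ^ i)"

definition bb :: "nat \<Rightarrow> nat \<Rightarrow> real" where
  "bb m i = real (m choose i) * (-1) ^ (m - i)"

lemma binomD: "(x - 1) ^ m = (\<Sum>i\<le>m. bb m i * x ^ i)"
  using binomial_ring[of x "-1::real" m] by (simp add: bb_def algebra_simps)

lemma sumD: "(\<Sum>t\<in>Omega n. (real (cher t) - real n / 4) ^ a * ((real (cher t) - real n / 4) - 1) ^ m)
   = (\<Sum>i\<le>m. bb m i * Ms n (i + a))"
proof -
  have "(\<Sum>t\<in>Omega n. (real (cher t) - real n / 4) ^ a * ((real (cher t) - real n / 4) - 1) ^ m)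
     = (\<Sum>t\<in>Omega n. \<Sum>i\<le>m. bb m i * (real (cher t) - real n / 4) ^ (i + a))"
    by (rule sum.cong[OF refl]) (simp only: binomD sum_distrib_left, simp add: power_add mult_ac)
  also have "\<dots> = (\<Sum>i\<le>m. bb m i * Ms n (i + a))"
    by (subst sum.swap) (simp add: Ms_def sum_distrib_left)
  finally show ?thesis .
qed

lemma stein_pt:
  fixes k n D A B :: real
  assumes "k = D + n / 4"
  shows "4 * (4 * k * (k - 1) * A - (n - 2 * k) * (n - 2 * k - 1) * B)
    = (n^2 - 4*n) * A + (8*n - 16) * (D * A) + 16 * (D^2 * A) - (n^2 - 2*n) * B - (8 - 8*n) * (D * B) - 16 * (D^2 * B)"
  unfolding assms by (simp add: field_simps power2_eq_square)

lemma stein_D: "(real n^2 - 4*real n) * (\<Sum>i\<le>m. bb m i * Ms n i)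
   + (8*real n - 16) * (\<Sum>i\<le>m. bb m i * Ms n (i+1))
   + 16 * (\<Sum>i\<le>m. bb m i * Ms n (i+2))
   - (real n^2 - 2*real n) * Ms n m - (8 - 8*real n) * Ms n (m+1) - 16 * Ms n (m+2) = 0"
proof -
  let ?D = "\<lambda>t. real (cher t) - real n / 4"
  have "0 = 4 * stein n (\<lambda>x. (x - real n / 4) ^ m)" by (simp add: stein_pow)
  also have "\<dots> = (\<Sum>t\<in>Omega n. (real n^2 - 4*real n) * (?D t - 1)^m + (8*real n - 16) * (?D t * (?D t - 1)^m)
       + 16 * (?D t^2 * (?D t - 1)^m) - (real n^2 - 2*real n) * ?D t ^ m - (8 - 8*real n) * (?D t * ?D t ^ m)
       - 16 * (?D t^2 * ?D t ^ m))"
    unfolding stein_def sum_distrib_left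
  proof (rule sum.cong[OF refl])
    fix t
    have e: "real (cher t) - 1 - real n / 4 = ?D t - 1" by simp
    show "4 * (4 * real (cher t) * (real (cher t) - 1) * (real (cher t) - 1 - real n / 4) ^ m -
          (real n - 2 * real (cher t)) * (real n - 2 * real (cher t) - 1) * (real (cher t) - real n / 4) ^ m) =
         (real n^2 - 4*real n) * (?D t - 1)^m + (8*real n - 16) * (?D t * (?D t - 1)^m)
       + 16 * (?D t^2 * (?D t - 1)^m) - (real n^2 - 2*real n) * ?D t ^ m - (8 - 8*real n) * (?D t * ?D t ^ m)
       - 16 * (?D t^2 * ?D t ^ m)"
      unfolding e by (rule stein_pt) simp
  qed
  also have "\<dots> = (real n^2 - 4*real n) * (\<Sum>t\<in>Omega n. ?D t ^ 0 * (?D t - 1)^m)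
     + (8*real n - 16) * (\<Sum>t\<in>Omega n. ?D t ^ 1 * (?D t - 1)^m)
     + 16 * (\<Sum>t\<in>Omega n. ?D t ^ 2 * (?D t - 1)^m)
     - (real n^2 - 2*real n) * Ms n m - (8 - 8*real n) * Ms n (m+1) - 16 * Ms n (m+2)"
    by (simp add: Ms_def sum.distrib sum_subtractf sum_distrib_left power_add power2_eq_square mult.assoc)
  also have "\<dots> = (real n^2 - 4*real n) * (\<Sum>i\<le>m. bb m i * Ms n i)
   + (8*real n - 16) * (\<Sum>i\<le>m. bb m i * Ms n (i+1))
   + 16 * (\<Sum>i\<le>m. bb m i * Ms n (i+2))
   - (real n^2 - 2*real n) * Ms n m - (8 - 8*real n) * Ms n (m+1) - 16 * Ms n (m+2)"
    by (simp only: sumD) simp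
  finally show ?thesis by simp
qed




definition M :: "nat \<Rightarrow> nat \<Rightarrow> real" where
  "M n i = Ms n i / real (C n)"

lemma bb_same [simp]: "bb m m = 1" by (simp add: bb_def)
lemma bb_pred: "bb (Suc k) k = - real (Suc k)" by (simp add: bb_def)

lemma R_gen:
  fixes X :: "nat \<Rightarrow> real" and n :: real
  assumes "(n^2 - 4*n) * (\<Sum>i\<le>m. bb m i * X i)
   + (8*n - 16) * (\<Sum>i\<le>m. bb m i * X (i+1))
   + 16 * (\<Sum>i\<le>m. bb m i * X (i+2))
   - (n^2 - 2*n) * X m - (8 - 8*n) * X (m+1) - 16 * X (m+2) = 0"
  shows "(16*n - 16*real m - 24) * X (m+1) = 2*n * X m - (n^2 - 4*n) * (\<Sum>i<m. bb m i * X i)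
     - (8*n - 16) * (\<Sum>i<m. bb m i * X (i+1)) - 16 * (\<Sum>i<m-1. bb m i * X (i+2))"
proof -
  have s: "(\<Sum>i\<le>m. g i) = (\<Sum>i<m. g i) + g m" for g :: "nat \<Rightarrow> real"
    by (simp add: lessThan_Suc_atMost[symmetric])
  have t: "(\<Sum>i<m. bb m i * X (i+2)) = - real m * X (m+1) + (\<Sum>i<m-1. bb m i * X (i+2))"
  proof (cases m)
    case (Suc k)
    then show ?thesis by (simp add: bb_pred add.commute)
  qed simp
  show ?thesis using assms unfolding s t by (simp add: algebra_simps)
qed

lemma R_Ms: "(16*real n - 16*real m - 24) * Ms n (m+1) = 2*real n * Ms n m - (real n^2 - 4*real n) * (\<Sum>i<m. bb m i * Ms n i)
     - (8*real n - 16) * (\<Sum>i<m. bb m i * Ms n (i+1)) - 16 * (\<Sum>i<m-1. bb m i * Ms n (i+2))"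
  by (rule R_gen[OF stein_D])

lemma R_M: "(16*real n - 16*real m - 24) * M n (m+1) = 2*real n * M n m - (real n^2 - 4*real n) * (\<Sum>i<m. bb m i * M n i)
     - (8*real n - 16) * (\<Sum>i<m. bb m i * M n (i+1)) - 16 * (\<Sum>i<m-1. bb m i * M n (i+2))"
proof -
  let ?c = "real (C n)"
  have "(16*real n - 16*real m - 24) * M n (m+1) = ((16*real n - 16*real m - 24) * Ms n (m+1)) / ?c"
    by (simp add: M_def)
  also have "\<dots> = (2*real n * Ms n m - (real n^2 - 4*real n) * (\<Sum>i<m. bb m i * Ms n i)
     - (8*real n - 16) * (\<Sum>i<m. bb m i * Ms n (i+1)) - 16 * (\<Sum>i<m-1. bb m i * Ms n (i+2))) / ?c"
    by (simp only: R_Ms)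
  also have "\<dots> = 2*real n * M n m - (real n^2 - 4*real n) * (\<Sum>i<m. bb m i * M n i)
     - (8*real n - 16) * (\<Sum>i<m. bb m i * M n (i+1)) - 16 * (\<Sum>i<m-1. bb m i * M n (i+2))"
    by (simp add: M_def diff_divide_distrib sum_divide_distrib[symmetric])
  finally show ?thesis .
qed




definition N :: "nat \<Rightarrow> nat \<Rightarrow> real" where
  "N i n = M n i / real n ^ (i div 2)"

lemma pow_ratio_0: "a < (e::nat) \<Longrightarrow> (\<lambda>n. real n ^ a / real n ^ e) \<longlonglongrightarrow> 0"
proof -
  assume ae: "a < e"
  have ev: "\<forall>\<^sub>F n in sequentially. real n ^ a / real n ^ e = inverse (real n ^ (e - a))"
    using eventually_gt_at_top[of 0]
  proof (rule eventually_mono)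
    fix n :: nat assume "n > 0"
    then have "real n ^ e = real n ^ a * real n ^ (e - a)"
      using ae by (simp add: power_add[symmetric])
    then show "real n ^ a / real n ^ e = inverse (real n ^ (e - a))"
      using \<open>n > 0\<close> by (simp add: field_simps)
  qed
  have "filterlim (\<lambda>n. real n ^ (e - a)) at_top sequentially"
    using ae by (intro filterlim_pow_at_top filterlim_real_sequentially) auto
  then have "(\<lambda>n. inverse (real n ^ (e - a))) \<longlonglongrightarrow> 0"
    by (rule tendsto_inverse_0_at_top)
  then show ?thesis using ev by (simp add: tendsto_cong)
qed

lemma lim_M0: "convergent (N j) \<Longrightarrow> j div 2 < b \<Longrightarrow> (\<lambda>n. M n j / real n ^ b) \<longlonglongrightarrow> 0"
proof -
  assume c: "convergent (N j)" and jb: "j div 2 < b"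
  then obtain L where L: "N j \<longlonglongrightarrow> L" by (auto simp: convergent_def)
  have "(\<lambda>n. N j n * (real n ^ (j div 2) / real n ^ b)) \<longlonglongrightarrow> L * 0"
    by (intro tendsto_mult L pow_ratio_0 jb)
  moreover have "\<forall>\<^sub>F n in sequentially. N j n * (real n ^ (j div 2) / real n ^ b) = M n j / real n ^ b"
    using eventually_gt_at_top[of 0] by eventually_elim (simp add: N_def field_simps)
  ultimately show ?thesis by (auto intro: Lim_transform_eventually)
qed

lemma lim_M: "N j \<longlonglongrightarrow> L \<Longrightarrow> j div 2 = b \<Longrightarrow> (\<lambda>n. M n j / real n ^ b) \<longlonglongrightarrow> L"
proof -
  assume "N j \<longlonglongrightarrow> L" "j div 2 = b"
  moreover have "N j = (\<lambda>n. M n j / real n ^ (j div 2))" by (auto simp: N_def)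
  ultimately show ?thesis by simp
qed

lemma null_sum:
  assumes "finite I" "\<And>i. i \<in> I \<Longrightarrow> convergent (N (g i)) \<and> g i div 2 < e"
  shows "(\<lambda>n. (\<Sum>i\<in>I. \<beta> i * M n (g i)) / real n ^ e) \<longlonglongrightarrow> 0"
proof -
  have "(\<lambda>n. \<Sum>i\<in>I. \<beta> i * (M n (g i) / real n ^ e)) \<longlonglongrightarrow> 0"
  proof (rule tendsto_null_sum)
    fix i assume "i \<in> I"
    then show "(\<lambda>n. \<beta> i * (M n (g i) / real n ^ e)) \<longlonglongrightarrow> 0"
      using assms(2)[of i] by (intro tendsto_mult_right_zero lim_M0) auto
  qed
  then show ?thesis by (simp add: sum_divide_distrib)
qed

lemma piece:
  assumes "(\<lambda>n. p n / real n ^ a) \<longlonglongrightarrow> \<alpha>" "(\<lambda>n. X n / real n ^ b) \<longlonglongrightarrow> \<beta>"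
  shows "(\<lambda>n. (p n * X n) / real n ^ (a + b)) \<longlonglongrightarrow> \<alpha> * \<beta>"
proof -
  have "(\<lambda>n. (p n / real n ^ a) * (X n / real n ^ b)) \<longlonglongrightarrow> \<alpha> * \<beta>"
    by (intro tendsto_mult assms)
  then show ?thesis by (simp add: power_add)
qed

lemma c1: "(\<lambda>n. (real n ^ 2 - 4 * real n) / real n ^ 2) \<longlonglongrightarrow> 1" by real_asymp
lemma c2: "(\<lambda>n. (8 * real n - 16) / real n ^ 1) \<longlonglongrightarrow> 8" by real_asymp
lemma c3: "(\<lambda>n. 2 * real n / real n ^ 1) \<longlonglongrightarrow> 2" by real_asymp
lemma c4: "(\<lambda>n. real n / (16 * real n - 16 * real m - 24)) \<longlonglongrightarrow> 1 / 16" by real_asymp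
lemma c5: "(\<lambda>n. (16::real) / real n ^ 0) \<longlonglongrightarrow> 16" by simp




lemma C_pos: "n \<ge> 1 \<Longrightarrow> C n > 0"
proof (induction n rule: nat_induct_at_least)
  case base then show ?case by simp
next
  case (Suc n)
  have "(n+1) * C (n+1) = 2 * ((2*n-1) * C n)" by (rule C_ratio[OF Suc.hyps])
  moreover have "2 * ((2*n-1) * C n) > 0" using Suc by simp
  ultimately show ?case by (metis Suc_eq_plus1 mult_eq_0_iff neq0_conv)
qed

lemma M0: "n \<ge> 1 \<Longrightarrow> M n 0 = 1"
  using C_pos[of n] by (simp add: M_def Ms_def)

lemma N0_lim: "N 0 \<longlonglongrightarrow> 1"
proof -
  have "\<forall>\<^sub>F n in sequentially. 1 = N 0 n"
    using eventually_ge_at_top[of 1] by eventually_elim (simp add: N_def M0)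
  then show ?thesis by (rule Lim_transform_eventually[OF tendsto_const])
qed

lemma N1_lim: "N 1 \<longlonglongrightarrow> 1/8"
proof -
  have "(\<lambda>n. 2 * real n / (16 * real n - 24)) \<longlonglongrightarrow> 1/8" by real_asymp
  moreover have "\<forall>\<^sub>F n in sequentially. 2 * real n / (16 * real n - 24) = N 1 n"
    using eventually_ge_at_top[of 2]
  proof eventually_elim
    case (elim n)
    have "(16*real n - 16*real 0 - 24) * M n (0+1) = 2*real n * M n 0"
      using R_M[of n 0] by simp
    moreover have "16 * real n - 24 \<noteq> 0" using elim by simp
    ultimately show ?case using elim by (simp add: N_def M0 field_simps)
  qed
  ultimately show ?thesis by (rule Lim_transform_eventually)
qed


lemma lim_final:
  fixes RHS :: "nat \<Rightarrow> real"
  assumes R: "\<And>n. (16*real n - 16*real m - 24) * M n (m+1) = RHS n"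
    and lim: "(\<lambda>n. RHS n / real n ^ Suc t) \<longlonglongrightarrow> L"
    and t: "(m+1) div 2 = t"
  shows "N (m+1) \<longlonglongrightarrow> L / 16"
proof -
  have "(\<lambda>n. (RHS n / real n ^ Suc t) * (real n / (16 * real n - 16 * real m - 24))) \<longlonglongrightarrow> L * (1/16)"
    by (intro tendsto_mult lim c4)
  moreover have "\<forall>\<^sub>F n in sequentially. (RHS n / real n ^ Suc t) * (real n / (16 * real n - 16 * real m - 24)) = N (m+1) n"
    using eventually_gt_at_top[of "m+2"]
  proof eventually_elim
    case (elim n)
    then have d: "16 * real n - 16 * real m - 24 \<noteq> 0" by simp
    have MM: "M n (m+1) = RHS n / (16 * real n - 16 * real m - 24)"
      using R[of n] d by (simp add: field_simps)
    have np: "real n > 0" using elim by simp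
    have "(RHS n / real n ^ Suc t) * (real n / (16 * real n - 16 * real m - 24))
        = (RHS n / (16 * real n - 16 * real m - 24)) / real n ^ t"
      using np d by (simp add: field_simps)
    also have "\<dots> = N (m+1) n" unfolding MM[symmetric] N_def t ..
    finally show ?case .
  qed
  ultimately show ?thesis by (auto intro: Lim_transform_eventually)
qed

lemma even_step:
  assumes conv: "\<And>j. j \<le> 2*r+1 \<Longrightarrow> convergent (N j)" and L: "N (2*r) \<longlonglongrightarrow> L"
  shows "N (2*r+2) \<longlonglongrightarrow> (2*real r+1) * L / 16"
proof -
  define m where "m = 2*r+1"
  define RHS where "RHS n = 2*real n * M n m - (real n^2 - 4*real n) * (\<Sum>i<m. bb m i * M n i)
     - (8*real n - 16) * (\<Sum>i<m. bb m i * M n (i+1)) - 16 * (\<Sum>i<m-1. bb m i * M n (i+2))" for n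
  have R: "(16*real n - 16*real m - 24) * M n (m+1) = RHS n" for n
    unfolding RHS_def by (rule R_M)
  have split: "(\<Sum>i<m. bb m i * M n i) = (\<Sum>i<2*r. bb m i * M n i) + bb m (2*r) * M n (2*r)" for n
    by (simp add: m_def)
  have bbv: "bb m (2*r) = - (2*real r + 1)" by (simp add: m_def bb_def)
  have P1: "(\<lambda>n. (2*real n * M n m) / real n ^ (1 + (r+1))) \<longlonglongrightarrow> 2 * 0"
    by (rule piece[OF c3 lim_M0]) (auto simp: m_def conv)
  have P2: "(\<lambda>n. ((real n^2 - 4*real n) * ((\<Sum>i<2*r. bb m i * M n i) + bb m (2*r) * M n (2*r))) / real n ^ (2 + r))
      \<longlonglongrightarrow> 1 * (0 + bb m (2*r) * L)"
  proof (rule piece[OF c1])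
    have "(\<lambda>n. (\<Sum>i<2*r. bb m i * M n i) / real n ^ r + bb m (2*r) * (M n (2*r) / real n ^ r)) \<longlonglongrightarrow> 0 + bb m (2*r) * L"
      by (intro tendsto_add tendsto_mult tendsto_const null_sum lim_M[OF L]) (auto intro: conv)
    then show "(\<lambda>n. ((\<Sum>i<2*r. bb m i * M n i) + bb m (2*r) * M n (2*r)) / real n ^ r) \<longlonglongrightarrow> 0 + bb m (2*r) * L"
      by (simp add: add_divide_distrib)
  qed
  have P3: "(\<lambda>n. ((8*real n - 16) * (\<Sum>i<m. bb m i * M n (i+1))) / real n ^ (1 + (r+1))) \<longlonglongrightarrow> 8 * 0"
    by (rule piece[OF c2 null_sum]) (auto simp: m_def intro: conv)
  have P4: "(\<lambda>n. (16 * (\<Sum>i<m-1. bb m i * M n (i+2))) / real n ^ (0 + (r+2))) \<longlonglongrightarrow> 16 * 0"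
    by (rule piece[OF c5 null_sum]) (auto simp: m_def intro: conv)
  have "(\<lambda>n. RHS n / real n ^ Suc (r+1)) \<longlonglongrightarrow> 2 * 0 - 1 * (0 + bb m (2*r) * L) - 8 * 0 - 16 * 0"
  proof -
    have "(\<lambda>n. (2*real n * M n m) / real n ^ (1 + (r+1))
        - ((real n^2 - 4*real n) * ((\<Sum>i<2*r. bb m i * M n i) + bb m (2*r) * M n (2*r))) / real n ^ (2 + r)
        - ((8*real n - 16) * (\<Sum>i<m. bb m i * M n (i+1))) / real n ^ (1 + (r+1))
        - (16 * (\<Sum>i<m-1. bb m i * M n (i+2))) / real n ^ (0 + (r+2)))
        \<longlonglongrightarrow> 2 * 0 - 1 * (0 + bb m (2*r) * L) - 8 * 0 - 16 * 0"
      by (intro tendsto_diff P1 P2 P3 P4)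
    moreover have "RHS n / real n ^ Suc (r+1) = (2*real n * M n m) / real n ^ (1 + (r+1))
        - ((real n^2 - 4*real n) * ((\<Sum>i<2*r. bb m i * M n i) + bb m (2*r) * M n (2*r))) / real n ^ (2 + r)
        - ((8*real n - 16) * (\<Sum>i<m. bb m i * M n (i+1))) / real n ^ (1 + (r+1))
        - (16 * (\<Sum>i<m-1. bb m i * M n (i+2))) / real n ^ (0 + (r+2))" for n
    proof -
      have e: "Suc (r+1) = 1 + (r+1)" "Suc (r+1) = 2 + r" "Suc (r+1) = 0 + (r+2)" by simp_all
      show ?thesis unfolding RHS_def split[symmetric] diff_divide_distrib
        by (simp only: e[symmetric])
    qed
    ultimately show ?thesis by simp
  qed
  then have "N (m+1) \<longlonglongrightarrow> (2 * 0 - 1 * (0 + bb m (2*r) * L) - 8 * 0 - 16 * 0) / 16"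
    by (rule lim_final[OF R, of "r+1"]) (simp add: m_def)
  then show ?thesis unfolding bbv by (simp add: m_def algebra_simps)
qed


lemma odd_step:
  assumes conv: "\<And>j. j \<le> 2*r+2 \<Longrightarrow> convergent (N j)"
    and L0: "N (2*r) \<longlonglongrightarrow> L0" and L1: "N (2*r+1) \<longlonglongrightarrow> L1" and L2: "N (2*r+2) \<longlonglongrightarrow> L2"
  shows "N (2*r+3) \<longlonglongrightarrow> (2 * L2 - 1 * (0 + bb (2*r+2) (2*r) * L0 + bb (2*r+2) (2*r+1) * L1)
           - 8 * (0 + bb (2*r+2) (2*r+1) * L2) - 16 * 0) / 16"
proof -
  define m where "m = 2*r+2"
  define RHS where "RHS n = 2*real n * M n m - (real n^2 - 4*real n) * (\<Sum>i<m. bb m i * M n i)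
     - (8*real n - 16) * (\<Sum>i<m. bb m i * M n (i+1)) - 16 * (\<Sum>i<m-1. bb m i * M n (i+2))" for n
  have R: "(16*real n - 16*real m - 24) * M n (m+1) = RHS n" for n
    unfolding RHS_def by (rule R_M)
  have split1: "(\<Sum>i<m. bb m i * M n i) = (\<Sum>i<2*r. bb m i * M n i) + bb m (2*r) * M n (2*r) + bb m (2*r+1) * M n (2*r+1)" for n
    by (simp add: m_def)
  have split2: "(\<Sum>i<m. bb m i * M n (i+1)) = (\<Sum>i<2*r+1. bb m i * M n (i+1)) + bb m (2*r+1) * M n (2*r+2)" for n
    by (simp add: m_def)
  have P1: "(\<lambda>n. (2*real n * M n m) / real n ^ (1 + (r+1))) \<longlonglongrightarrow> 2 * L2"
    by (rule piece[OF c3 lim_M]) (use L2 in \<open>auto simp: m_def\<close>)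
  have P2: "(\<lambda>n. ((real n^2 - 4*real n) * ((\<Sum>i<2*r. bb m i * M n i) + bb m (2*r) * M n (2*r) + bb m (2*r+1) * M n (2*r+1))) / real n ^ (2 + r))
      \<longlonglongrightarrow> 1 * (0 + bb m (2*r) * L0 + bb m (2*r+1) * L1)"
  proof (rule piece[OF c1])
    have "(\<lambda>n. (\<Sum>i<2*r. bb m i * M n i) / real n ^ r + bb m (2*r) * (M n (2*r) / real n ^ r)
          + bb m (2*r+1) * (M n (2*r+1) / real n ^ r)) \<longlonglongrightarrow> 0 + bb m (2*r) * L0 + bb m (2*r+1) * L1"
      by (intro tendsto_add tendsto_mult tendsto_const null_sum lim_M[OF L0] lim_M[OF L1]) (auto intro: conv)
    then show "(\<lambda>n. ((\<Sum>i<2*r. bb m i * M n i) + bb m (2*r) * M n (2*r) + bb m (2*r+1) * M n (2*r+1)) / real n ^ r)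
        \<longlonglongrightarrow> 0 + bb m (2*r) * L0 + bb m (2*r+1) * L1"
      by (simp add: add_divide_distrib)
  qed
  have P3: "(\<lambda>n. ((8*real n - 16) * ((\<Sum>i<2*r+1. bb m i * M n (i+1)) + bb m (2*r+1) * M n (2*r+2))) / real n ^ (1 + (r+1)))
      \<longlonglongrightarrow> 8 * (0 + bb m (2*r+1) * L2)"
  proof (rule piece[OF c2])
    have "(\<lambda>n. (\<Sum>i<2*r+1. bb m i * M n (i+1)) / real n ^ (r+1) + bb m (2*r+1) * (M n (2*r+2) / real n ^ (r+1)))
        \<longlonglongrightarrow> 0 + bb m (2*r+1) * L2"
      by (intro tendsto_add tendsto_mult tendsto_const null_sum lim_M[OF L2]) (auto intro: conv)
    then show "(\<lambda>n. ((\<Sum>i<2*r+1. bb m i * M n (i+1)) + bb m (2*r+1) * M n (2*r+2)) / real n ^ (r+1))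
        \<longlonglongrightarrow> 0 + bb m (2*r+1) * L2"
      by (simp add: add_divide_distrib)
  qed
  have P4: "(\<lambda>n. (16 * (\<Sum>i<m-1. bb m i * M n (i+2))) / real n ^ (0 + (r+2))) \<longlonglongrightarrow> 16 * 0"
    by (rule piece[OF c5 null_sum]) (auto simp: m_def intro: conv)
  have "(\<lambda>n. RHS n / real n ^ Suc (r+1)) \<longlonglongrightarrow> 2 * L2 - 1 * (0 + bb m (2*r) * L0 + bb m (2*r+1) * L1)
           - 8 * (0 + bb m (2*r+1) * L2) - 16 * 0"
  proof -
    have "(\<lambda>n. (2*real n * M n m) / real n ^ (1 + (r+1))
        - ((real n^2 - 4*real n) * ((\<Sum>i<2*r. bb m i * M n i) + bb m (2*r) * M n (2*r) + bb m (2*r+1) * M n (2*r+1))) / real n ^ (2 + r)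
        - ((8*real n - 16) * ((\<Sum>i<2*r+1. bb m i * M n (i+1)) + bb m (2*r+1) * M n (2*r+2))) / real n ^ (1 + (r+1))
        - (16 * (\<Sum>i<m-1. bb m i * M n (i+2))) / real n ^ (0 + (r+2)))
        \<longlonglongrightarrow> 2 * L2 - 1 * (0 + bb m (2*r) * L0 + bb m (2*r+1) * L1)
           - 8 * (0 + bb m (2*r+1) * L2) - 16 * 0"
      by (intro tendsto_diff P1 P2 P3 P4)
    moreover have "RHS n / real n ^ Suc (r+1) = (2*real n * M n m) / real n ^ (1 + (r+1))
        - ((real n^2 - 4*real n) * ((\<Sum>i<2*r. bb m i * M n i) + bb m (2*r) * M n (2*r) + bb m (2*r+1) * M n (2*r+1))) / real n ^ (2 + r)
        - ((8*real n - 16) * ((\<Sum>i<2*r+1. bb m i * M n (i+1)) + bb m (2*r+1) * M n (2*r+2))) / real n ^ (1 + (r+1))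
        - (16 * (\<Sum>i<m-1. bb m i * M n (i+2))) / real n ^ (0 + (r+2))" for n
    proof -
      have e: "Suc (r+1) = 1 + (r+1)" "Suc (r+1) = 2 + r" "Suc (r+1) = 0 + (r+2)" by simp_all
      show ?thesis unfolding RHS_def split1[symmetric] split2[symmetric] diff_divide_distrib
        by (simp only: e[symmetric])
    qed
    ultimately show ?thesis by simp
  qed
  then have "N (m+1) \<longlonglongrightarrow> (2 * L2 - 1 * (0 + bb m (2*r) * L0 + bb m (2*r+1) * L1)
           - 8 * (0 + bb m (2*r+1) * L2) - 16 * 0) / 16"
    by (rule lim_final[OF R, of "r+1"]) (simp add: m_def)
  moreover have e: "2*r+3 = m+1" by (simp add: m_def)
  ultimately show ?thesis unfolding e by (simp only: m_def)
qed


definition cc :: "nat \<Rightarrow> real" where "cc s = real (dfact (2*s - 1)) / 16 ^ s"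
definition dd :: "nat \<Rightarrow> real" where "dd s = real (dfact (2*s + 1)) / (8 * 16 ^ s)"

lemma dfact_odd: "dfact (2*r+1) = (2*r+1) * dfact (2*r - 1)"
proof (cases r)
  case (Suc k)
  have "2*r+1 = Suc (Suc (2*k+1))" "2*r - 1 = 2*k+1" using Suc by auto
  then show ?thesis by simp
qed simp

lemma choose_Suc_self: "(Suc n choose n) = Suc n"
  by (induction n) simp_all

lemma choose_SS: "real (Suc (Suc k) choose k) * 2 = real (Suc (Suc k)) * real (Suc k)"
proof (induction k)
  case (Suc k)
  have "Suc (Suc (Suc k)) choose Suc k = (Suc (Suc k) choose k) + (Suc (Suc k) choose Suc k)"
    by simp
  then have "real (Suc (Suc (Suc k)) choose Suc k) * 2 = real (Suc (Suc k) choose k) * 2 + real (Suc (Suc k)) * 2"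
    by (simp add: choose_Suc_self algebra_simps)
  then show ?case using Suc by (simp add: algebra_simps)
qed simp

lemma bb1: "bb (2*r+2) (2*r+1) = - (2*real r + 2)"
proof -
  have "(2*r+2) choose (2*r+1) = 2*r+2"
    using choose_Suc_self[of "2*r+1"] by simp
  then show ?thesis by (simp add: bb_def)
qed

lemma bb0: "bb (2*r+2) (2*r) = (real r + 1) * (2 * real r + 1)"
proof -
  have "real ((2*r+2) choose (2*r)) * 2 = real (2*r+2) * real (2*r+1)"
    using choose_SS[of "2*r"] by simp
  moreover have "(2*r+2) - 2*r = 2" by simp
  ultimately show ?thesis by (simp add: bb_def algebra_simps)
qed

lemma E1: "(2*real r+1) * cc r / 16 = cc (Suc r)"
proof -
  have "dfact (2 * Suc r - 1) = (2*r+1) * dfact (2*r - 1)"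
    using dfact_odd[of r] by simp
  then show ?thesis by (simp add: cc_def algebra_simps)
qed

lemma E2: "(2 * cc (Suc r) - 1 * (0 + bb (2*r+2) (2*r) * cc r + bb (2*r+2) (2*r+1) * dd r)
           - 8 * (0 + bb (2*r+2) (2*r+1) * cc (Suc r)) - 16 * 0) / 16 = dd (Suc r)"
proof -
  define y where "y = real (dfact (2*r - 1))"
  have x: "real (dfact (2*r+1)) = (2*real r+1) * y" unfolding y_def dfact_odd by (simp add: algebra_simps)
  have x2: "real (dfact (2 * Suc r - 1)) = (2*real r+1) * y" using x by simp
  have x3: "real (dfact (2 * Suc r + 1)) = (2*real r+3) * ((2*real r+1) * y)"
  proof -
    have "2 * Suc r + 1 = Suc (Suc (2*r+1))" by simp
    then have "dfact (2 * Suc r + 1) = (2*r+3) * dfact (2*r+1)" by (simp add: algebra_simps)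
    then show ?thesis using x by simp
  qed
  show ?thesis
    unfolding bb0 bb1 cc_def dd_def x x2 x3 y_def[symmetric]
    by (simp add: field_simps)
qed

lemma main: "N (2*s) \<longlonglongrightarrow> cc s \<and> N (2*s+1) \<longlonglongrightarrow> dd s"
proof (induction s rule: less_induct)
  case (less s)
  have IHc: "convergent (N j)" if "j < 2*s" for j
  proof -
    have "j div 2 < s" using that by simp
    then have "N (2*(j div 2)) \<longlonglongrightarrow> cc (j div 2) \<and> N (2*(j div 2)+1) \<longlonglongrightarrow> dd (j div 2)"
      by (rule less.IH)
    moreover have "j = 2*(j div 2) \<or> j = 2*(j div 2)+1" by presburger
    ultimately show ?thesis unfolding convergent_def by metis
  qed
  have Ev: "N (2*s) \<longlonglongrightarrow> cc s"
  proof (cases s)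
    case 0 then show ?thesis using N0_lim by (simp add: cc_def)
  next
    case (Suc r)
    have "N (2*r+2) \<longlonglongrightarrow> (2*real r+1) * cc r / 16"
      by (rule even_step) (use Suc less.IH[of r] IHc in auto)
    then show ?thesis using Suc E1 by simp
  qed
  have Od: "N (2*s+1) \<longlonglongrightarrow> dd s"
  proof (cases s)
    case 0 then show ?thesis using N1_lim by (simp add: dd_def)
  next
    case (Suc r)
    have conv: "convergent (N j)" if "j \<le> 2*r+2" for j
    proof (cases "j < 2*s")
      case True then show ?thesis by (rule IHc)
    next
      case False
      then have "j = 2*s" using that Suc by simp
      then show ?thesis using Ev unfolding convergent_def by auto
    qed
    have "N (2*r+3) \<longlonglongrightarrow> (2 * cc (Suc r) - 1 * (0 + bb (2*r+2) (2*r) * cc r + bb (2*r+2) (2*r+1) * dd r)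
           - 8 * (0 + bb (2*r+2) (2*r+1) * cc (Suc r)) - 16 * 0) / 16"
      by (rule odd_step) (use conv less.IH[of r] Ev Suc in auto)
    then show ?thesis unfolding E2 using Suc by (simp add: numeral_3_eq_3)
  qed
  show ?case using Ev Od by simp
qed




lemma expect_form:
  "expect n (\<lambda>t. real (S2 t) ^ l * (real (S2 t) - real n / 4) ^ k)
    = (\<Sum>i\<le>l. real (l choose i) * (real n / 4) ^ (l - i) * M n (k + i))"
proof -
  have "expect n (\<lambda>t. real (S2 t) ^ l * (real (S2 t) - real n / 4) ^ k)
     = (\<Sum>t\<in>Omega n. \<Sum>i\<le>l. real (l choose i) * (real n / 4) ^ (l - i) * (real (cher t) - real n / 4) ^ (k + i)) / real (C n)"
    unfolding expect_def S2_cher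
  proof (rule arg_cong[where f = "\<lambda>x. x / real (C n)"], rule sum.cong[OF refl])
    fix t
    have "real (cher t) ^ l = ((real (cher t) - real n / 4) + real n / 4) ^ l" by simp
    also have "\<dots> = (\<Sum>i\<le>l. real (l choose i) * (real (cher t) - real n / 4) ^ i * (real n / 4) ^ (l - i))"
      by (rule binomial_ring)
    finally show "real (cher t) ^ l * (real (cher t) - real n / 4) ^ k =
        (\<Sum>i\<le>l. real (l choose i) * (real n / 4) ^ (l - i) * (real (cher t) - real n / 4) ^ (k + i))"
      by (simp add: sum_distrib_left sum_distrib_right power_add mult_ac)
  qed
  also have "\<dots> = (\<Sum>i\<le>l. real (l choose i) * (real n / 4) ^ (l - i) * M n (k + i))"
    by (subst sum.swap) (simp add: M_def Ms_def sum_divide_distrib sum_distrib_left)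
  finally show ?thesis .
qed

lemma conv_all: "convergent (N j)"
proof -
  have "N (2*(j div 2)) \<longlonglongrightarrow> cc (j div 2) \<and> N (2*(j div 2)+1) \<longlonglongrightarrow> dd (j div 2)" by (rule main)
  moreover have "j = 2*(j div 2) \<or> j = 2*(j div 2)+1" by presburger
  ultimately show ?thesis unfolding convergent_def by metis
qed

lemma scaled_sum:
  assumes lim: "\<And>i. i \<le> l \<Longrightarrow> (\<lambda>n. M n (k + i) / real n ^ (s + i)) \<longlonglongrightarrow> lam i"
  shows "(\<lambda>n. expect n (\<lambda>t. real (S2 t) ^ l * (real (S2 t) - real n / 4) ^ k) / ((real n / 4) ^ l * real n ^ s))
     \<longlonglongrightarrow> (\<Sum>i\<le>l. real (l choose i) * 4 ^ i * lam i)"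
proof -
  have "(\<lambda>n. \<Sum>i\<le>l. real (l choose i) * 4 ^ i * (M n (k + i) / real n ^ (s + i))) \<longlonglongrightarrow> (\<Sum>i\<le>l. real (l choose i) * 4 ^ i * lam i)"
    by (intro tendsto_sum tendsto_mult tendsto_const lim) auto
  moreover have "\<forall>\<^sub>F n in sequentially. (\<Sum>i\<le>l. real (l choose i) * 4 ^ i * (M n (k + i) / real n ^ (s + i)))
     = expect n (\<lambda>t. real (S2 t) ^ l * (real (S2 t) - real n / 4) ^ k) / ((real n / 4) ^ l * real n ^ s)"
    using eventually_gt_at_top[of 0]
  proof eventually_elim
    case (elim n)
    have "expect n (\<lambda>t. real (S2 t) ^ l * (real (S2 t) - real n / 4) ^ k) / ((real n / 4) ^ l * real n ^ s)
      = (\<Sum>i\<le>l. real (l choose i) * (real n / 4) ^ (l - i) * M n (k + i) / ((real n / 4) ^ l * real n ^ s))"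
      unfolding expect_form by (simp add: sum_divide_distrib)
    also have "\<dots> = (\<Sum>i\<le>l. real (l choose i) * 4 ^ i * (M n (k + i) / real n ^ (s + i)))"
    proof (rule sum.cong[OF refl])
      fix i assume "i \<in> {..l}"
      then have li: "(real n / 4) ^ l = (real n / 4) ^ (l - i) * (real n / 4) ^ i"
        by (simp add: power_add[symmetric])
      show "real (l choose i) * (real n / 4) ^ (l - i) * M n (k + i) / ((real n / 4) ^ l * real n ^ s) =
         real (l choose i) * 4 ^ i * (M n (k + i) / real n ^ (s + i))"
        unfolding li using elim by (simp add: field_simps power_add power_divide)
    qed
    finally show ?case by simp
  qed
  ultimately show ?thesis by (rule Lim_transform_eventually)
qed

lemma equiv_from_lim:
  fixes f :: "nat \<Rightarrow> real"
  assumes "(\<lambda>n. f n / ((real n / 4) ^ l * real n ^ s)) \<longlonglongrightarrow> K" "K \<noteq> 0"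
  shows "f \<sim>[at_top] (\<lambda>n. (real n / 4) ^ l * K * real n ^ s)"
proof (rule asymp_equivI')
  have "(\<lambda>n. f n / ((real n / 4) ^ l * real n ^ s) / K) \<longlonglongrightarrow> K / K"
    by (intro tendsto_divide assms tendsto_const)
  moreover have "\<forall>\<^sub>F n in sequentially. f n / ((real n / 4) ^ l * real n ^ s) / K = f n / ((real n / 4) ^ l * K * real n ^ s)"
    using eventually_gt_at_top[of 0] by eventually_elim (simp add: field_simps)
  ultimately show "(\<lambda>n. f n / ((real n / 4) ^ l * K * real n ^ s)) \<longlonglongrightarrow> 1"
    using assms(2) by (auto intro: Lim_transform_eventually)
qed

theorem lemma4:
  fixes s l :: nat
  shows "(\<lambda>n. expect n (\<lambda>t. real (S2 t) ^ l * (real (S2 t) - real n / 4) ^ (2 * s)))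
           \<sim>[at_top] (\<lambda>n. (real n / 4) ^ l * (real (dfact (2 * s - 1)) / 4 ^ (2 * s)) * real n ^ s)
       \<and> (\<lambda>n. expect n (\<lambda>t. real (S2 t) ^ l * (real (S2 t) - real n / 4) ^ (2 * s + 1)))
           \<sim>[at_top] (\<lambda>n. (real n / 4) ^ l * (real (dfact (2 * s + 1)) / (2 * 4 ^ (2 * s + 1)))
                            * (2 * real l + 1) * real n ^ s)"
proof
  have p16: "(4::real) ^ (2 * s) = 16 ^ s" by (simp add: power_mult)
  have dpos: "dfact k > 0" for k by (induction k rule: dfact.induct) auto
  define lamE where "lamE i = (if i = 0 then cc s else 0)" for i :: nat
  have limE: "(\<lambda>n. M n (2*s + i) / real n ^ (s + i)) \<longlonglongrightarrow> lamE i" for i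
  proof (cases "i = 0")
    case True
    then show ?thesis using main[of s] by (intro lim_M) (auto simp: lamE_def)
  next
    case False
    have "(\<lambda>n. M n (2*s + i) / real n ^ (s + i)) \<longlonglongrightarrow> 0"
      by (rule lim_M0[OF conv_all]) (use False in simp)
    then show ?thesis using False by (simp add: lamE_def)
  qed
  have sumE: "(\<Sum>i\<le>l. real (l choose i) * 4 ^ i * lamE i) = cc s"
    by (simp add: lamE_def if_distrib[of "\<lambda>x. _ * x"] cong: if_cong)
  have ccv: "cc s = real (dfact (2 * s - 1)) / 4 ^ (2 * s)" by (simp add: cc_def p16)
  show "(\<lambda>n. expect n (\<lambda>t. real (S2 t) ^ l * (real (S2 t) - real n / 4) ^ (2 * s)))
           \<sim>[at_top] (\<lambda>n. (real n / 4) ^ l * (real (dfact (2 * s - 1)) / 4 ^ (2 * s)) * real n ^ s)"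
  proof -
    have ss: "(\<lambda>n. expect n (\<lambda>t. real (S2 t) ^ l * (real (S2 t) - real n / 4) ^ (2*s)) / ((real n / 4) ^ l * real n ^ s))
     \<longlonglongrightarrow> (\<Sum>i\<le>l. real (l choose i) * 4 ^ i * lamE i)"
      by (rule scaled_sum) (rule limE)
    show ?thesis unfolding ccv[symmetric]
      by (rule equiv_from_lim[OF ss[unfolded sumE]]) (simp add: cc_def dpos)
  qed
next
  have p16: "(4::real) ^ (2 * s + 1) = 4 * 16 ^ s" by (simp add: power_mult)
  have dpos: "dfact k > 0" for k by (induction k rule: dfact.induct) auto
  define lamO where "lamO i = (if i = 0 then dd s else if i = 1 then cc (Suc s) else 0)" for i :: nat
  have limO: "(\<lambda>n. M n ((2*s+1) + i) / real n ^ (s + i)) \<longlonglongrightarrow> lamO i" for i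
  proof -
    consider "i = 0" | "i = 1" | "i \<ge> 2" by linarith
    then show ?thesis
    proof cases
      case 1 then show ?thesis using main[of s] by (intro lim_M) (auto simp: lamO_def)
    next
      case 2 then show ?thesis using main[of "Suc s"] by (intro lim_M) (auto simp: lamO_def)
    next
      case 3
      then have "(2 * s + 1 + i) div 2 < s + i" by linarith
      then have "(\<lambda>n. M n ((2*s+1) + i) / real n ^ (s + i)) \<longlonglongrightarrow> 0"
        by (rule lim_M0[OF conv_all])
      then show ?thesis using 3 by (simp add: lamO_def)
    qed
  qed
  have sumO: "(\<Sum>i\<le>l. real (l choose i) * 4 ^ i * lamO i) = dd s + real l * 4 * cc (Suc s)"
  proof -
    have "(\<Sum>i\<le>l. real (l choose i) * 4 ^ i * lamO i)
        = (\<Sum>i\<le>l. (if i = 0 then dd s else 0) + (if i = 1 then real l * 4 * cc (Suc s) else 0))"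
      by (rule sum.cong[OF refl]) (auto simp: lamO_def)
    also have "\<dots> = dd s + real l * 4 * cc (Suc s)"
      by (cases l) (simp_all add: sum.distrib)
    finally show ?thesis .
  qed
  have Kv: "dd s + real l * 4 * cc (Suc s) = real (dfact (2 * s + 1)) / (2 * 4 ^ (2 * s + 1)) * (2 * real l + 1)"
  proof -
    have q: "(4::real) ^ (s * 2) = 16 ^ s" unfolding mult.commute[of s 2] power_mult by simp
    show ?thesis by (simp add: dd_def cc_def p16 q field_simps)
  qed
  have fe: "(\<lambda>n. (real n / 4) ^ l * (real (dfact (2 * s + 1)) / (2 * 4 ^ (2 * s + 1))) * (2 * real l + 1) * real n ^ s)
     = (\<lambda>n. (real n / 4) ^ l * (dd s + real l * 4 * cc (Suc s)) * real n ^ s)"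
    unfolding Kv by (simp add: mult.assoc)
  have Kpos: "dd s + real l * 4 * cc (Suc s) \<noteq> 0"
    unfolding Kv using dpos[of "2*s+1"] by simp
  show "(\<lambda>n. expect n (\<lambda>t. real (S2 t) ^ l * (real (S2 t) - real n / 4) ^ (2 * s + 1)))
           \<sim>[at_top] (\<lambda>n. (real n / 4) ^ l * (real (dfact (2 * s + 1)) / (2 * 4 ^ (2 * s + 1)))
                            * (2 * real l + 1) * real n ^ s)"
  proof -
    have ss: "(\<lambda>n. expect n (\<lambda>t. real (S2 t) ^ l * (real (S2 t) - real n / 4) ^ (2*s+1)) / ((real n / 4) ^ l * real n ^ s))
     \<longlonglongrightarrow> (\<Sum>i\<le>l. real (l choose i) * 4 ^ i * lamO i)"
      by (rule scaled_sum) (rule limO)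
    show ?thesis unfolding fe
      by (rule equiv_from_lim[OF ss[unfolded sumO] Kpos])
  qed
qed



end
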